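(* For every $n\in\mathbb{N}$, the number of maximal sum-free sets in the elementary abelian group $\mathbb{Z}_3^n$ (of order $3^n$) is $3^n-1$.
   Context: A non-empty subset $S$ of a group $G$ is called sum-free if for all $s_1,s_2\in S$ (including the case $s_1=s_2$) one has $s_1s_2\notin S$. A maximal sum-free set in a finite group $G$ means a sum-free set of largest possible cardinality among all sum-free sets in $G$ (maximal by cardinality). *)

theory Defs
  imports "HOL-Algebra.Group"
begin

definition sum_free :: "('a, 'b) monoid_scheme \<Rightarrow> 'a set \<Rightarrow> bool" where
  "sum_free G S \<longleftrightarrow> S \<noteq> {} \<and> S \<subseteq> carrier G \<and>
     (\<forall>s1\<in>S. \<forall>s2\<in>S. s1 \<otimes>\<^bsub>G\<^esub> s2 \<notin> S)"

definition max_sum_free :: "('a, 'b) monoid_scheme \<Rightarrow> 'a set \<Rightarrow> bool" where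
  "max_sum_free G S \<longleftrightarrow> sum_free G S \<and> (\<forall>T. sum_free G T \<longrightarrow> card T \<le> card S)"

definition Z3n :: "nat \<Rightarrow> (nat \<Rightarrow> int) monoid" where
  "Z3n n = \<lparr> carrier = {v. (\<forall>i<n. v i \<in> {0,1,2}) \<and> (\<forall>i\<ge>n. v i = 0)},
             mult = (\<lambda>v w i. (v i + w i) mod 3),
             one = (\<lambda>i. 0) \<rparr>"

end

theory Submission
  imports Defs "HOL-Library.FuncSet"
begin

lemma Z3n_carrier_iff:
  "x \<in> carrier (Z3n n) \<longleftrightarrow> (\<forall>i<n. x i \<in> {0,1,2}) \<and> (\<forall>i\<ge>n. x i = 0)"
  by (simp add: Z3n_def)

lemma Z3n_mult: "x \<otimes>\<^bsub>Z3n n\<^esub> y = (\<lambda>i. (x i + y i) mod 3)"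
  by (simp add: Z3n_def)

lemma Z3n_one: "\<one>\<^bsub>Z3n n\<^esub> = (\<lambda>i. 0)"
  by (simp add: Z3n_def)

lemma mod3_cases: "(a::int) mod 3 = 0 \<or> a mod 3 = 1 \<or> a mod 3 = 2"
  by presburger

lemma Z3n_range: "x \<in> carrier (Z3n n) \<Longrightarrow> 0 \<le> x i \<and> x i < 3"
  by (cases "i < n") (auto simp: Z3n_carrier_iff)

lemma Z3n_comm_group: "comm_group (Z3n n)"
proof (rule comm_groupI)
  fix x y assume x: "x \<in> carrier (Z3n n)" and y: "y \<in> carrier (Z3n n)"
  show "x \<otimes>\<^bsub>Z3n n\<^esub> y \<in> carrier (Z3n n)"
    using x y mod3_cases by (auto simp: Z3n_carrier_iff Z3n_mult)
  show "x \<otimes>\<^bsub>Z3n n\<^esub> y = y \<otimes>\<^bsub>Z3n n\<^esub> x"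
    by (simp add: Z3n_mult add.commute)
next
  show "\<one>\<^bsub>Z3n n\<^esub> \<in> carrier (Z3n n)" by (simp add: Z3n_carrier_iff Z3n_one)
next
  fix x y z assume "x \<in> carrier (Z3n n)" "y \<in> carrier (Z3n n)" "z \<in> carrier (Z3n n)"
  show "x \<otimes>\<^bsub>Z3n n\<^esub> y \<otimes>\<^bsub>Z3n n\<^esub> z = x \<otimes>\<^bsub>Z3n n\<^esub> (y \<otimes>\<^bsub>Z3n n\<^esub> z)"
    by (simp add: Z3n_mult mod_add_left_eq mod_add_right_eq add.assoc)
next
  fix x assume x: "x \<in> carrier (Z3n n)"
  show "\<one>\<^bsub>Z3n n\<^esub> \<otimes>\<^bsub>Z3n n\<^esub> x = x"
    using Z3n_range[OF x] by (auto simp: Z3n_mult Z3n_one)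
  show "\<exists>y\<in>carrier (Z3n n). y \<otimes>\<^bsub>Z3n n\<^esub> x = \<one>\<^bsub>Z3n n\<^esub>"
  proof (rule bexI[of _ "\<lambda>i. (2 * x i) mod 3"])
    show "(\<lambda>i. (2 * x i) mod 3) \<otimes>\<^bsub>Z3n n\<^esub> x = \<one>\<^bsub>Z3n n\<^esub>"
    proof -
      have "((2 * x i) mod 3 + x i) mod 3 = 0" for i
      proof -
        have "((2 * x i) mod 3 + x i) mod 3 = (2 * x i + x i) mod 3" by (simp add: mod_add_left_eq)
        also have "\<dots> = (3 * x i) mod 3" by simp
        finally show ?thesis by simp
      qed
      then show ?thesis by (simp add: Z3n_mult Z3n_one)
    qed
    show "(\<lambda>i. (2 * x i) mod 3) \<in> carrier (Z3n n)"
      using x mod3_cases by (auto simp: Z3n_carrier_iff)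
  qed
qed

definition e :: "nat \<Rightarrow> nat \<Rightarrow> int" where "e j = (\<lambda>i. if i = j then 1 else 0)"

definition dot :: "nat \<Rightarrow> (nat \<Rightarrow> int) \<Rightarrow> (nat \<Rightarrow> int) \<Rightarrow> int" where
  "dot n u x = (\<Sum>i<n. u i * x i) mod 3"

definition Su :: "nat \<Rightarrow> (nat \<Rightarrow> int) \<Rightarrow> (nat \<Rightarrow> int) set" where
  "Su n u = {x \<in> carrier (Z3n n). dot n u x = 1}"

lemma card_Z3n: "card (carrier (Z3n n)) = 3 ^ n" "finite (carrier (Z3n n))"
proof -
  have b: "bij_betw (\<lambda>x. restrict x {..<n}) (carrier (Z3n n)) (PiE {..<n} (\<lambda>_. {0,1,2::int}))"
  proof (rule bij_betw_imageI)
    show "inj_on (\<lambda>x. restrict x {..<n}) (carrier (Z3n n))"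
    proof (rule inj_onI)
      fix x y assume x: "x \<in> carrier (Z3n n)" and y: "y \<in> carrier (Z3n n)"
        and eq: "restrict x {..<n} = restrict y {..<n}"
      show "x = y"
      proof
        fix i show "x i = y i"
        proof (cases "i < n")
          case True then show ?thesis using fun_cong[OF eq, of i] by simp
        next
          case False then show ?thesis using x y by (simp add: Z3n_carrier_iff)
        qed
      qed
    qed
    show "(\<lambda>x. restrict x {..<n}) ` carrier (Z3n n) = PiE {..<n} (\<lambda>_. {0,1,2::int})"
    proof
      show "(\<lambda>x. restrict x {..<n}) ` carrier (Z3n n) \<subseteq> PiE {..<n} (\<lambda>_. {0,1,2::int})"
        by (rule image_subsetI) (simp add: PiE_iff Z3n_carrier_iff)
      show "PiE {..<n} (\<lambda>_. {0,1,2::int}) \<subseteq> (\<lambda>x. restrict x {..<n}) ` carrier (Z3n n)"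
      proof
        fix g assume g: "g \<in> PiE {..<n} (\<lambda>_. {0,1,2::int})"
        have "g = restrict (\<lambda>i. if i < n then g i else 0) {..<n}"
          using g by (auto simp: PiE_def extensional_def restrict_def)
        moreover have "(\<lambda>i. if i < n then g i else 0) \<in> carrier (Z3n n)"
          using g by (auto simp: Z3n_carrier_iff)
        ultimately show "g \<in> (\<lambda>x. restrict x {..<n}) ` carrier (Z3n n)" by blast
      qed
    qed
  qed
  have "card (PiE {..<n} (\<lambda>_. {0,1,2::int})) = 3 ^ n"
    by (simp add: card_PiE numeral_3_eq_3)
  then show "card (carrier (Z3n n)) = 3 ^ n" using bij_betw_same_card[OF b] by simp
  show "finite (carrier (Z3n n))"
    using bij_betw_finite[OF b] by (simp add: finite_PiE)
qed


locale z3 =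
  fixes n :: nat
begin

sublocale grp: comm_group "Z3n n" by (rule Z3n_comm_group)

abbreviation G where "G \<equiv> carrier (Z3n n)"
abbreviation ad where "ad x y \<equiv> x \<otimes>\<^bsub>Z3n n\<^esub> y"
abbreviation ng where "ng x \<equiv> inv\<^bsub>Z3n n\<^esub> x"

lemma ng_eq: assumes x: "x \<in> G" shows "ng x = ad x x"
proof (rule grp.inv_equality)
  have "((x i + x i) mod 3 + x i) mod 3 = 0" for i
  proof -
    have "((x i + x i) mod 3 + x i) mod 3 = (x i + x i + x i) mod 3" by (simp add: mod_add_left_eq)
    also have "\<dots> = (3 * x i) mod 3" by simp
    finally show ?thesis by simp
  qed
  then show "ad (ad x x) x = \<one>\<^bsub>Z3n n\<^esub>" by (simp add: Z3n_mult Z3n_one)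
qed (use x in auto)

lemma cube: "x \<in> G \<Longrightarrow> ad (ad x x) x = \<one>\<^bsub>Z3n n\<^esub>"
  by (metis grp.l_inv ng_eq)

lemma three_disj:
  assumes sf: "sum_free (Z3n n) S" and a: "a \<in> S"
  shows "card (S \<union> (\<lambda>s. ad s a) ` S \<union> (\<lambda>s. ad s (ng a)) ` S) = 3 * card S"
    and "S \<union> (\<lambda>s. ad s a) ` S \<union> (\<lambda>s. ad s (ng a)) ` S \<subseteq> G"
proof -
  have SG: "S \<subseteq> G" and fr: "\<And>s1 s2. s1 \<in> S \<Longrightarrow> s2 \<in> S \<Longrightarrow> ad s1 s2 \<notin> S"
    using sf unfolding sum_free_def by auto
  have aG: "a \<in> G" using SG a by auto
  have fin: "finite S" using finite_subset[OF SG card_Z3n(2)] .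
  have inj1: "inj_on (\<lambda>s. ad s a) S"
    by (rule inj_onI) (meson SG aG grp.right_cancel subsetD)
  have inj2: "inj_on (\<lambda>s. ad s (ng a)) S"
    by (rule inj_onI) (meson SG aG grp.inv_closed grp.right_cancel subsetD)
  have d1: "S \<inter> (\<lambda>s. ad s a) ` S = {}" using fr a by auto
  have d2: "S \<inter> (\<lambda>s. ad s (ng a)) ` S = {}"
  proof (rule ccontr)
    assume "S \<inter> (\<lambda>s. ad s (ng a)) ` S \<noteq> {}"
    then obtain s where s: "s \<in> S" and t: "ad s (ng a) \<in> S" by auto
    have sG: "s \<in> G" using s SG by auto
    have "ad (ad s (ng a)) a = s" using sG aG by (simp add: grp.m_assoc)
    then show False using fr[OF t a] s by simp
  qed
  have d3: "(\<lambda>s. ad s a) ` S \<inter> (\<lambda>s. ad s (ng a)) ` S = {}"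
  proof (rule ccontr)
    assume "(\<lambda>s. ad s a) ` S \<inter> (\<lambda>s. ad s (ng a)) ` S \<noteq> {}"
    then obtain s t where s: "s \<in> S" and t: "t \<in> S" and eq: "ad s a = ad t (ng a)" by auto
    have sG: "s \<in> G" and tG: "t \<in> G" using s t SG by auto
    have "ad (ad s a) a = t" using eq tG aG by (simp add: grp.m_assoc)
    then have "ad t a = ad s (ad (ad a a) a)" using sG aG by (metis grp.m_assoc grp.m_closed)
    also have "\<dots> = s" using cube[OF aG] sG by simp
    finally show False using fr[OF t a] s by simp
  qed
  have "card (S \<union> (\<lambda>s. ad s a) ` S \<union> (\<lambda>s. ad s (ng a)) ` S)
      = card (S \<union> (\<lambda>s. ad s a) ` S) + card ((\<lambda>s. ad s (ng a)) ` S)"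
    by (rule card_Un_disjoint) (use fin d2 d3 in auto)
  also have "\<dots> = card S + card ((\<lambda>s. ad s a) ` S) + card ((\<lambda>s. ad s (ng a)) ` S)"
    using card_Un_disjoint[of S "(\<lambda>s. ad s a) ` S"] fin d1 by auto
  also have "\<dots> = 3 * card S" using card_image[OF inj1] card_image[OF inj2] by simp
  finally show "card (S \<union> (\<lambda>s. ad s a) ` S \<union> (\<lambda>s. ad s (ng a)) ` S) = 3 * card S" .
  show "S \<union> (\<lambda>s. ad s a) ` S \<union> (\<lambda>s. ad s (ng a)) ` S \<subseteq> G" using SG aG by auto
qed

lemma sf_bound:
  assumes sf: "sum_free (Z3n n) S" shows "3 * card S \<le> 3 ^ n"
proof -
  obtain a where a: "a \<in> S" using sf unfolding sum_free_def by auto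
  show ?thesis
    using three_disj[OF sf a] card_mono[OF card_Z3n(2)] card_Z3n(1) by metis
qed

lemma sf_part:
  assumes sf: "sum_free (Z3n n) S" and full: "3 * card S = 3 ^ n" and a: "a \<in> S" and x: "x \<in> G"
  shows "x \<in> S \<or> (\<exists>s\<in>S. x = ad s a) \<or> (\<exists>s\<in>S. x = ad s (ng a))"
proof -
  have "S \<union> (\<lambda>s. ad s a) ` S \<union> (\<lambda>s. ad s (ng a)) ` S = G"
    by (rule card_subset_eq[OF card_Z3n(2) three_disj(2)[OF sf a]])
      (use three_disj(1)[OF sf a] full card_Z3n(1) in simp)
  then show ?thesis using x by blast
qed

end


locale z3max = z3 +
  fixes S
  assumes sf: "sum_free (Z3n n) S" and full: "3 * card S = 3 ^ n"
begin

lemma SG: "S \<subseteq> G" using sf unfolding sum_free_def by auto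
lemma memG: "x \<in> S \<Longrightarrow> x \<in> G" using SG by auto
lemma sfree: "a \<in> S \<Longrightarrow> b \<in> S \<Longrightarrow> ad a b \<notin> S" using sf unfolding sum_free_def by auto
lemma Sne: "S \<noteq> {}" using sf unfolding sum_free_def by auto
lemma part: "a \<in> S \<Longrightarrow> x \<in> G \<Longrightarrow> x \<in> S \<or> (\<exists>s\<in>S. x = ad s a) \<or> (\<exists>s\<in>S. x = ad s (ng a))"
  using sf_part[OF sf full] by blast

lemma ngng: "x \<in> G \<Longrightarrow> ad (ng x) (ng x) = x"
  by (metis ng_eq grp.inv_inv grp.inv_closed)

lemma NI: "s \<in> S \<Longrightarrow> ng s \<notin> S"
  using sfree ngng memG by metis

lemma R1: assumes a: "a \<in> S" and b: "b \<in> S" shows "ng (ad a b) \<in> S"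
proof -
  have aG: "a \<in> G" and bG: "b \<in> G" using a b memG by auto
  from part[OF a grp.inv_closed[OF bG]] show ?thesis
  proof (elim disjE bexE)
    assume "ng b \<in> S" then show ?thesis using NI[OF b] by simp
  next
    fix c assume c: "c \<in> S" and eq: "ng b = ad c a"
    have cG: "c \<in> G" using c memG by auto
    have "c = ad (ad c a) (ng a)" using cG aG by (simp add: grp.m_assoc)
    also have "\<dots> = ad (ng b) (ng a)" using eq by simp
    also have "\<dots> = ng (ad a b)" using aG bG by (simp add: grp.inv_mult grp.m_comm)
    finally show ?thesis using c by simp
  next
    fix c assume c: "c \<in> S" and eq: "ng b = ad c (ng a)"
    have cG: "c \<in> G" using c memG by auto
    have "ad b c = ad b (ad (ad c (ng a)) a)" using cG aG by (simp add: grp.m_assoc)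
    also have "\<dots> = ad b (ad (ng b) a)" using eq by simp
    also have "\<dots> = a" using aG bG by (simp add: grp.m_assoc[symmetric])
    finally show ?thesis using sfree[OF b c] a by simp
  qed
qed

lemma R2: assumes x: "x \<in> S" and y: "y \<in> G" and ny: "ng y \<in> S"
  shows "ad x y \<notin> S" and "ng (ad x y) \<notin> S"
proof -
  have xG: "x \<in> G" using x memG by auto
  show "ad x y \<notin> S"
  proof
    assume h: "ad x y \<in> S"
    have "ad (ad x y) (ng y) = x" using xG y by (simp add: grp.m_assoc)
    then show False using sfree[OF h ny] x by simp
  qed
  show "ng (ad x y) \<notin> S"
  proof
    assume h: "ng (ad x y) \<in> S"
    have "ad x (ng (ad x y)) = ng y" using xG y
      by (simp add: grp.inv_mult grp.m_assoc[symmetric])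
    then show False using sfree[OF x h] ny by simp
  qed
qed

lemma R3: assumes x: "x \<in> S" and y: "y \<in> G" and n1: "y \<notin> S" and n2: "ng y \<notin> S"
  shows "ad x y \<in> S"
proof -
  have xG: "x \<in> G" using x memG by auto
  from part[OF x y] show ?thesis
  proof (elim disjE bexE)
    assume "y \<in> S" then show ?thesis using n1 by simp
  next
    fix s assume s: "s \<in> S" and eq: "y = ad s x"
    then show ?thesis using R1[OF s x] n2 by simp
  next
    fix s assume s: "s \<in> S" and eq: "y = ad s (ng x)"
    have sG: "s \<in> G" using s memG by auto
    have "ad x y = s" using eq xG sG by (simp add: grp.m_lcomm)
    then show ?thesis using s by simp
  qed
qed

lemma R4: assumes x: "x \<in> G" and y: "y \<in> G" and "x \<notin> S" "ng x \<notin> S" "y \<notin> S" "ng y \<notin> S"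
  shows "ad x y \<notin> S" and "ng (ad x y) \<notin> S"
proof -
  obtain a where a: "a \<in> S" using Sne by auto
  have aG: "a \<in> G" using a memG by auto
  have "ad a x \<in> S" using R3[OF a x] assms by simp
  then have h: "ad a (ad x y) \<in> S" using R3[of "ad a x" y] assms aG by (simp add: grp.m_assoc)
  show "ad x y \<notin> S" using sfree[OF a] h by blast
  show "ng (ad x y) \<notin> S" using R2(1)[OF a grp.m_closed[OF x y]] h by blast
qed

definition f :: "(nat \<Rightarrow> int) \<Rightarrow> int" where
  "f x = (if x \<in> S then 1 else if ng x \<in> S then 2 else 0)"

lemma f_range: "f x \<in> {0,1,2}" by (simp add: f_def)

lemma f_add: assumes x: "x \<in> G" and y: "y \<in> G" shows "f (ad x y) = (f x + f y) mod 3"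
proof -
  have xy: "ad x y = ad y x" using x y by (simp add: grp.m_comm)
  have nxy: "ng (ad x y) = ad (ng x) (ng y)" using x y by (simp add: grp.inv_mult)
  have nnxy: "ng (ad (ng x) (ng y)) = ad x y" using x y by (simp add: grp.inv_mult)
  consider (c1) "x \<in> S" | (c2) "x \<notin> S" "ng x \<in> S" | (c0) "x \<notin> S" "ng x \<notin> S" by blast
  then show ?thesis
  proof cases
    case c1
    consider (d1) "y \<in> S" | (d2) "y \<notin> S" "ng y \<in> S" | (d0) "y \<notin> S" "ng y \<notin> S" by blast
    then show ?thesis
    proof cases
      case d1 then show ?thesis using c1 sfree R1 by (simp add: f_def)
    next
      case d2 then show ?thesis using c1 R2[OF c1 y] by (simp add: f_def)
    next
      case d0 then show ?thesis using c1 R3[OF c1 y] by (simp add: f_def)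
    qed
  next
    case c2
    consider (d1) "y \<in> S" | (d2) "y \<notin> S" "ng y \<in> S" | (d0) "y \<notin> S" "ng y \<notin> S" by blast
    then show ?thesis
    proof cases
      case d1 then show ?thesis using c2 R2[OF d1 x] xy by (simp add: f_def)
    next
      case d2
      have "ad x y \<in> S" using R1[OF c2(2) d2(2)] nnxy by simp
      then show ?thesis using c2 d2 by (simp add: f_def)
    next
      case d0
      have "ng (ad x y) \<in> S" using R3[OF c2(2) grp.inv_closed[OF y]] d0 y nxy by simp
      then show ?thesis using c2 d0 NI by (auto simp: f_def)
    qed
  next
    case c0
    consider (d1) "y \<in> S" | (d2) "y \<notin> S" "ng y \<in> S" | (d0) "y \<notin> S" "ng y \<notin> S" by blast
    then show ?thesis
    proof cases
      case d1 then show ?thesis using c0 R3[OF d1 x] xy by (simp add: f_def)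
    next
      case d2
      have h: "ad (ng y) (ng x) \<in> S" using R3[OF d2(2) grp.inv_closed[OF x]] c0 x by simp
      have "ad (ng y) (ng x) = ng (ad x y)" using x y nxy
        by (metis grp.inv_closed grp.m_comm)
      then have "ng (ad x y) \<in> S" using h by simp
      then show ?thesis using c0 d2 NI by (auto simp: f_def)
    next
      case d0 then show ?thesis using c0 R4[OF x y] by (simp add: f_def)
    qed
  qed
qed

end


context z3
begin

lemma single_G: "j < n \<Longrightarrow> c \<in> {0,1,2} \<Longrightarrow> (\<lambda>i. if i = j then c else 0) \<in> G"
  by (auto simp: Z3n_carrier_iff)

lemma e_G: "j < n \<Longrightarrow> e j \<in> G"
  using single_G[of j 1] by (simp add: e_def)

lemma dot_single: "j < n \<Longrightarrow> dot n u (\<lambda>i. if i = j then c else 0) = (u j * c) mod 3"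
proof -
  assume j: "j < n"
  have "(\<Sum>i<n. u i * (if i = j then c else 0)) = (\<Sum>i<n. if i = j then u j * c else 0)"
    by (rule sum.cong) auto
  also have "\<dots> = u j * c" using j by (simp add: sum.delta)
  finally show ?thesis by (simp add: dot_def)
qed

lemma dot_add: assumes "x \<in> G" "y \<in> G" shows "dot n u (ad x y) = (dot n u x + dot n u y) mod 3"
proof -
  have "dot n u (ad x y) = (\<Sum>i<n. u i * ((x i + y i) mod 3)) mod 3"
    by (simp add: dot_def Z3n_mult)
  also have "\<dots> = (\<Sum>i<n. (u i * ((x i + y i) mod 3)) mod 3) mod 3"
    by (simp add: mod_sum_eq)
  also have "\<dots> = (\<Sum>i<n. (u i * (x i + y i)) mod 3) mod 3"
    by (simp add: mod_mult_right_eq)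
  also have "\<dots> = (\<Sum>i<n. u i * (x i + y i)) mod 3"
    by (simp add: mod_sum_eq)
  also have "\<dots> = ((\<Sum>i<n. u i * x i) + (\<Sum>i<n. u i * y i)) mod 3"
    by (simp add: distrib_left sum.distrib)
  also have "\<dots> = (dot n u x + dot n u y) mod 3"
    by (simp add: dot_def mod_add_eq)
  finally show ?thesis .
qed

lemma dot_range: "dot n u x \<in> {0,1,2}"
  using mod3_cases[of "\<Sum>i<n. u i * x i"] by (auto simp: dot_def)

lemma coord:
  fixes g :: "(nat \<Rightarrow> int) \<Rightarrow> int"
  assumes add: "\<And>x y. x \<in> G \<Longrightarrow> y \<in> G \<Longrightarrow> g (ad x y) = (g x + g y) mod 3"
    and rng: "\<And>x. g x \<in> {0,1,2}"
    and x: "x \<in> G"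
  shows "g x = (\<Sum>i<n. x i * g (e i)) mod 3"
proof -
  have g1: "g (\<lambda>i. 0) = 0"
  proof -
    have "g \<one>\<^bsub>Z3n n\<^esub> = (g \<one>\<^bsub>Z3n n\<^esub> + g \<one>\<^bsub>Z3n n\<^esub>) mod 3"
      using add[OF grp.one_closed grp.one_closed] by simp
    then have "g \<one>\<^bsub>Z3n n\<^esub> = 0" using rng[of "\<one>\<^bsub>Z3n n\<^esub>"] by auto
    then show ?thesis by (simp add: Z3n_one)
  qed
  have main: "\<forall>x. x \<in> G \<longrightarrow> (\<forall>i\<ge>m. x i = 0) \<longrightarrow> g x = (\<Sum>i<m. x i * g (e i)) mod 3" for m
  proof (induction m)
    case 0
    show ?case
    proof (intro allI impI)
      fix x assume "x \<in> G" "\<forall>i\<ge>0. x i = 0"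
      then have "x = (\<lambda>i. 0)" by auto
      then show "g x = (\<Sum>i<0. x i * g (e i)) mod 3" using g1 by simp
    qed
  next
    case (Suc m)
    show ?case
    proof (intro allI impI)
      fix x assume xG: "x \<in> G" and z: "\<forall>i\<ge>Suc m. x i = 0"
      define x' where "x' = x(m := 0)"
      define y where "y = (\<lambda>i. if i = m then x m else 0)"
      have xm: "x m \<in> {0,1,2}" using Z3n_range[OF xG, of m] by auto
      have x'G: "x' \<in> G" using xG by (auto simp: x'_def Z3n_carrier_iff)
      have yG: "y \<in> G"
      proof (cases "m < n")
        case True then show ?thesis using single_G[OF True xm] by (simp add: y_def)
      next
        case False then have "x m = 0" using xG by (simp add: Z3n_carrier_iff)
        then show ?thesis by (simp add: y_def Z3n_carrier_iff)
      qed
      have xeq: "x = ad x' y"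
      proof
        fix i show "x i = ad x' y i"
          using Z3n_range[OF xG, of i] Z3n_range[OF xG, of m] by (simp add: Z3n_mult x'_def y_def)
      qed
      have z': "\<forall>i\<ge>m. x' i = 0" using z by (auto simp: x'_def)
      have IH: "g x' = (\<Sum>i<m. x' i * g (e i)) mod 3" using Suc.IH x'G z' by blast
      have sx': "(\<Sum>i<m. x' i * g (e i)) = (\<Sum>i<m. x i * g (e i))"
        by (rule sum.cong) (auto simp: x'_def)
      have gy: "g y = (x m * g (e m)) mod 3"
      proof -
        consider "x m = 0" | "x m = 1" | "x m = 2" using xm by auto
        then show ?thesis
        proof cases
          case 1 then have "y = (\<lambda>i. 0)" by (auto simp: y_def)
          then show ?thesis using g1 1 by simp
        next
          case 2 then have "y = e m" by (auto simp: y_def e_def)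
          then show ?thesis using 2 rng[of "e m"] by auto
        next
          case 3
          then have mn: "m < n" using xG by (metis Z3n_carrier_iff not_le zero_neq_numeral)
          have "y = ad (e m) (e m)" using 3 by (auto simp: y_def e_def Z3n_mult)
          then have "g y = (g (e m) + g (e m)) mod 3" using add[OF e_G[OF mn] e_G[OF mn]] by simp
          then show ?thesis using 3 by simp
        qed
      qed
      have "g x = (g x' + g y) mod 3" using xeq add[OF x'G yG] by simp
      also have "\<dots> = ((\<Sum>i<m. x i * g (e i)) mod 3 + (x m * g (e m)) mod 3) mod 3"
        using IH sx' gy by simp
      also have "\<dots> = ((\<Sum>i<m. x i * g (e i)) + x m * g (e m)) mod 3"
        by (simp add: mod_add_eq)
      also have "\<dots> = (\<Sum>i<Suc m. x i * g (e i)) mod 3" by simp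
      finally show "g x = (\<Sum>i<Suc m. x i * g (e i)) mod 3" .
    qed
  qed
  have "\<forall>i\<ge>n. x i = 0" using x by (simp add: Z3n_carrier_iff)
  then show ?thesis using main[of n] x by blast
qed

lemma nonzero_coord: assumes u: "u \<in> G" and u1: "u \<noteq> \<one>\<^bsub>Z3n n\<^esub>"
  obtains j where "j < n" "u j = 1 \<or> u j = 2"
proof -
  have "\<exists>j<n. u j \<noteq> 0"
  proof (rule ccontr)
    assume "\<not> (\<exists>j<n. u j \<noteq> 0)"
    then have "u = (\<lambda>i. 0)" using u by (auto simp: Z3n_carrier_iff) (metis not_le)
    then show False using u1 by (simp add: Z3n_one)
  qed
  then obtain j where "j < n" "u j \<noteq> 0" by auto
  then show ?thesis using that u by (auto simp: Z3n_carrier_iff)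
qed

lemma Su_good: assumes u: "u \<in> G" and u1: "u \<noteq> \<one>\<^bsub>Z3n n\<^esub>"
  shows "sum_free (Z3n n) (Su n u)" and "3 * card (Su n u) = 3 ^ n"
proof -
  obtain j where j: "j < n" "u j = 1 \<or> u j = 2" using nonzero_coord[OF u u1] by blast
  define d where "d = (\<lambda>i. if i = j then u j else 0)"
  have dG: "d \<in> G" using single_G[of j "u j"] j by (auto simp: d_def)
  have dd: "dot n u d = 1" using dot_single[OF j(1), of u "u j"] j(2) by (auto simp: d_def)
  have dS: "d \<in> Su n u" using dG dd by (simp add: Su_def)
  have SuG: "Su n u \<subseteq> G" by (auto simp: Su_def)
  show sfS: "sum_free (Z3n n) (Su n u)"
    unfolding sum_free_def
  proof (intro conjI ballI)
    show "Su n u \<noteq> {}" using dS by auto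
    show "Su n u \<subseteq> G" by (rule SuG)
    fix s1 s2 assume "s1 \<in> Su n u" "s2 \<in> Su n u"
    then show "ad s1 s2 \<notin> Su n u" using dot_add[of s1 s2 u] by (simp add: Su_def)
  qed
  have ndd: "dot n u (ng d) = 2"
    using ng_eq[OF dG] dot_add[OF dG dG, of u] dd by simp
  have "G \<subseteq> Su n u \<union> (\<lambda>s. ad s d) ` Su n u \<union> (\<lambda>s. ad s (ng d)) ` Su n u"
  proof
    fix x assume x: "x \<in> G"
    consider "dot n u x = 0" | "dot n u x = 1" | "dot n u x = 2" using dot_range[of u x] by auto
    then show "x \<in> Su n u \<union> (\<lambda>s. ad s d) ` Su n u \<union> (\<lambda>s. ad s (ng d)) ` Su n u"
    proof cases
      case 1
      have sG: "ad x d \<in> G" using x dG by simp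
      have "dot n u (ad x d) = 1" using dot_add[OF x dG, of u] 1 dd by simp
      then have "ad x d \<in> Su n u" using sG by (simp add: Su_def)
      moreover have "x = ad (ad x d) (ng d)" using x dG by (simp add: grp.m_assoc)
      ultimately show ?thesis by blast
    next
      case 2 then show ?thesis using x by (simp add: Su_def)
    next
      case 3
      have sG: "ad x (ng d) \<in> G" using x dG by simp
      have "dot n u (ad x (ng d)) = 1" using dot_add[OF x grp.inv_closed[OF dG], of u] 3 ndd by simp
      then have "ad x (ng d) \<in> Su n u" using sG by (simp add: Su_def)
      moreover have "x = ad (ad x (ng d)) d" using x dG by (simp add: grp.m_assoc)
      ultimately show ?thesis by blast
    qed
  qed
  then have "Su n u \<union> (\<lambda>s. ad s d) ` Su n u \<union> (\<lambda>s. ad s (ng d)) ` Su n u = G"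
    using three_disj(2)[OF sfS dS] by blast
  then show "3 * card (Su n u) = 3 ^ n"
    using three_disj(1)[OF sfS dS] card_Z3n(1) by simp
qed

lemma Su_inj: assumes u: "u \<in> G" and v: "v \<in> G" and eq: "Su n u = Su n v" shows "u = v"
proof
  fix j show "u j = v j"
  proof (cases "j < n")
    case False then show ?thesis using u v by (simp add: Z3n_carrier_iff)
  next
    case True
    have uj: "u j \<in> {0,1,2}" and vj: "v j \<in> {0,1,2}" using u v True by (auto simp: Z3n_carrier_iff)
    have m1: "(\<lambda>i. if i = j then 1 else 0) \<in> Su n w \<longleftrightarrow> w j mod 3 = 1" for w
      using dot_single[OF True, of w 1] single_G[OF True, of 1] by (simp add: Su_def)
    have m2: "(\<lambda>i. if i = j then 2 else 0) \<in> Su n w \<longleftrightarrow> (w j * 2) mod 3 = 1" for w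
      using dot_single[OF True, of w 2] single_G[OF True, of 2] by (simp add: Su_def)
    have a1: "u j mod 3 = 1 \<longleftrightarrow> v j mod 3 = 1" using m1[of u] m1[of v] eq by simp
    have a2: "(u j * 2) mod 3 = 1 \<longleftrightarrow> (v j * 2) mod 3 = 1" using m2[of u] m2[of v] eq by simp
    show ?thesis using uj vj a1 a2 by auto
  qed
qed

end

context z3max
begin

definition u where "u = (\<lambda>i. if i < n then f (e i) else 0)"

lemma S_rep: "u \<in> G" "u \<noteq> \<one>\<^bsub>Z3n n\<^esub>" "S = Su n u"
proof -
  show uG: "u \<in> G" using f_range by (auto simp: u_def Z3n_carrier_iff)
  have fd: "f x = dot n u x" if x: "x \<in> G" for x
  proof -
    have "f x = (\<Sum>i<n. x i * f (e i)) mod 3"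
      by (rule coord[OF f_add f_range x])
    also have "(\<Sum>i<n. x i * f (e i)) = (\<Sum>i<n. u i * x i)"
      by (rule sum.cong) (auto simp: u_def)
    finally show ?thesis by (simp add: dot_def)
  qed
  show SS: "S = Su n u"
  proof
    show "S \<subseteq> Su n u"
    proof
      fix x assume x: "x \<in> S"
      then have "f x = 1" by (simp add: f_def)
      then show "x \<in> Su n u" using fd[OF memG[OF x]] memG[OF x] by (simp add: Su_def)
    qed
    show "Su n u \<subseteq> S"
    proof
      fix x assume "x \<in> Su n u"
      then have "x \<in> G" "f x = 1" using fd by (auto simp: Su_def)
      then show "x \<in> S" by (auto simp: f_def split: if_splits)
    qed
  qed
  show "u \<noteq> \<one>\<^bsub>Z3n n\<^esub>"
  proof
    assume "u = \<one>\<^bsub>Z3n n\<^esub>"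
    then have "Su n u = {}" by (auto simp: Su_def dot_def Z3n_one)
    then show False using SS Sne by simp
  qed
qed

end

theorem mainTheorem2:
  fixes n :: nat
  assumes "n \<ge> 1"
  shows "card {S. max_sum_free (Z3n n) S} = 3 ^ n - 1"
proof -
  interpret z3 n .
  have e0G: "e 0 \<in> G" using e_G assms by simp
  have e01: "e 0 \<noteq> \<one>\<^bsub>Z3n n\<^esub>" by (auto simp: e_def Z3n_one fun_eq_iff)
  have eqset: "{S. max_sum_free (Z3n n) S} = Su n ` (G - {\<one>\<^bsub>Z3n n\<^esub>})"
  proof
    show "{S. max_sum_free (Z3n n) S} \<subseteq> Su n ` (G - {\<one>\<^bsub>Z3n n\<^esub>})"
    proof
      fix S assume "S \<in> {S. max_sum_free (Z3n n) S}"
      then have sf: "sum_free (Z3n n) S" and mx: "\<And>T. sum_free (Z3n n) T \<Longrightarrow> card T \<le> card S"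
        by (auto simp: max_sum_free_def)
      have "card (Su n (e 0)) \<le> card S" using mx Su_good(1)[OF e0G e01] by blast
      then have "3 * card S = 3 ^ n" using Su_good(2)[OF e0G e01] sf_bound[OF sf] by linarith
      then interpret z3max n S using sf by unfold_locales
      show "S \<in> Su n ` (G - {\<one>\<^bsub>Z3n n\<^esub>})" using S_rep by blast
    qed
    show "Su n ` (G - {\<one>\<^bsub>Z3n n\<^esub>}) \<subseteq> {S. max_sum_free (Z3n n) S}"
    proof
      fix S assume "S \<in> Su n ` (G - {\<one>\<^bsub>Z3n n\<^esub>})"
      then obtain v where v: "v \<in> G" "v \<noteq> \<one>\<^bsub>Z3n n\<^esub>" and S: "S = Su n v" by blast
      have "card T \<le> card S" if T: "sum_free (Z3n n) T" for T
      proof -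
        have "3 * card T \<le> 3 * card S" using sf_bound[OF T] Su_good(2)[OF v] S by simp
        then show ?thesis by simp
      qed
      then show "S \<in> {S. max_sum_free (Z3n n) S}"
        using Su_good(1)[OF v] S by (simp add: max_sum_free_def)
    qed
  qed
  have inj: "inj_on (Su n) (G - {\<one>\<^bsub>Z3n n\<^esub>})"
    by (rule inj_onI) (use Su_inj in blast)
  have "card {S. max_sum_free (Z3n n) S} = card (G - {\<one>\<^bsub>Z3n n\<^esub>})"
    using eqset card_image[OF inj] by simp
  also have "\<dots> = 3 ^ n - 1" using card_Z3n by (simp add: card_Diff_singleton)
  finally show ?thesis .
qed

end
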